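(* Let $F=(f_t)_{t\in\mathbb{R}}$ be a continuous flow on a compact metric space $X$, $\phi\colon X\to\mathbb{R}$ continuous, and $\mathcal{G}\subset X\times\mathbb{R}^+$. Suppose that $\mathcal{G}\cap(X\times[T_0,\infty))$ has (W)-specification at scale $\delta>0$ with maximum gap size $\tau$, and $\zeta>\delta$ is such that $\phi$ has the Bowen property on $\mathcal{G}$ at scale $\zeta$. Then for every $\gamma>2\zeta$ there is a constant $C_1>0$ such that for every $k\in\mathbb{N}$ and $t_1,\dots,t_k\ge T_0$, writing $T=\sum_{i=1}^kt_i+(k-1)\tau$ and $\theta=\zeta-\delta$, we have $$\prod_{j=1}^k\Lambda(\mathcal{G},\gamma,0,t_j)\le C_1^k\Lambda(X,\theta,0,T).$$
   Context: $\mathbb{R}^+=[0,\infty)$. $d_t(x,y)=\sup_{s\in[0,t]}d(f_sx,f_sy)$, $B_t(x,\eta)=\{y:d_t(x,y)<\eta\}$; $E$ is $(t,\delta)$-separated if $d_t(x,y)>\delta$ for distinct $x,y\in E$. $\mathcal{C}_t=\{x:(x,t)\in\mathcal{C}\}$; $\Phi_\eta(x,t)=\sup_{y\in B_t(x,\eta)}\int_0^t\phi(f_sy)ds$; $\Lambda(\mathcal{C},\delta,\eta,t)=\sup\{\sum_{x\in E}e^{\Phi_\eta(x,t)}:E\subset\mathcal{C}_t\ (t,\delta)\text{-separated}\}$, with $X$ meaning $\mathcal{C}=X\times\mathbb{R}^+$. A collection $\mathcal{G}'$ has (W)-specification at scale $\delta$ with maximum gap size $\tau$ if for every $\{(x_i,t_i)\}_{i=1}^k\subset\mathcal{G}'$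 there are $y\in X$ and $\tau_1,\dots,\tau_{k-1}\in[0,\tau]$ with $d_{t_j}(f_{s_{j-1}+\tau_{j-1}}y,x_j)<\delta$ for $1\le j\le k$, where $s_j=\sum_{i\le j}t_i+\sum_{i\le j-1}\tau_i$, $s_0=\tau_0=0$; and if two collections agree in their first $j$ entries then their gluing times agree for indices $<j$. $\phi$ has the Bowen property at scale $\zeta$ on $\mathcal{G}$ if there is $K$ with $\sup_{y\in B_t(x,\zeta)}|\Phi_0(x,t)-\Phi_0(y,t)|\le K$ for all $(x,t)\in\mathcal{G}$. *)

theory Defs
  imports "HOL-Analysis.Analysis"
begin

text \<open>Continuous flow on a compact metric space (the space X is the whole type).\<close>
definition is_cont_flow :: "(real \<Rightarrow> 'a::metric_space \<Rightarrow> 'a) \<Rightarrow> bool" where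
  "is_cont_flow f \<longleftrightarrow> continuous_on UNIV (\<lambda>p. f (fst p) (snd p))
     \<and> (\<forall>x. f 0 x = x) \<and> (\<forall>s t x. f (s + t) x = f s (f t x))"

definition bowen_dist :: "(real \<Rightarrow> 'a::metric_space \<Rightarrow> 'a) \<Rightarrow> real \<Rightarrow> 'a \<Rightarrow> 'a \<Rightarrow> real" where
  "bowen_dist f t x y = (SUP s\<in>{0..t}. dist (f s x) (f s y))"

definition bowen_ball :: "(real \<Rightarrow> 'a::metric_space \<Rightarrow> 'a) \<Rightarrow> real \<Rightarrow> 'a \<Rightarrow> real \<Rightarrow> 'a set" where
  "bowen_ball f t x \<eta> = {y. bowen_dist f t x y < \<eta>}"

definition separated :: "(real \<Rightarrow> 'a::metric_space \<Rightarrow> 'a) \<Rightarrow> real \<Rightarrow> real \<Rightarrow> 'a set \<Rightarrow> bool" where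
  "separated f t \<delta> E \<longleftrightarrow> (\<forall>x\<in>E. \<forall>y\<in>E. x \<noteq> y \<longrightarrow> bowen_dist f t x y > \<delta>)"

definition birkhoff_int :: "(real \<Rightarrow> 'a::metric_space \<Rightarrow> 'a) \<Rightarrow> ('a \<Rightarrow> real) \<Rightarrow> 'a \<Rightarrow> real \<Rightarrow> real" where
  "birkhoff_int f \<phi> y t = integral {0..t} (\<lambda>s. \<phi> (f s y))"

text \<open>\<Phi>_\<eta>(x,t); the point x itself is included so that \<Phi>_0(x,t) is the Birkhoff integral
  along x (standard convention; for \<eta> > 0 x already lies in the Bowen ball).\<close>
definition Phi :: "(real \<Rightarrow> 'a::metric_space \<Rightarrow> 'a) \<Rightarrow> ('a \<Rightarrow> real) \<Rightarrow> real \<Rightarrow> 'a \<Rightarrow> real \<Rightarrow> real" where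
  "Phi f \<phi> \<eta> x t = (SUP y \<in> insert x (bowen_ball f t x \<eta>). birkhoff_int f \<phi> y t)"

definition slice :: "('a \<times> real) set \<Rightarrow> real \<Rightarrow> 'a set" where
  "slice C t = {x. (x, t) \<in> C}"

definition Lambda :: "(real \<Rightarrow> 'a::metric_space \<Rightarrow> 'a) \<Rightarrow> ('a \<Rightarrow> real) \<Rightarrow> ('a \<times> real) set
    \<Rightarrow> real \<Rightarrow> real \<Rightarrow> real \<Rightarrow> real" where
  "Lambda f \<phi> C \<delta> \<eta> t = Sup {(\<Sum>x\<in>E. exp (Phi f \<phi> \<eta> x t)) | E.
      finite E \<and> E \<subseteq> slice C t \<and> separated f t \<delta> E}"

text \<open>Start time of the j-th orbit segment (0-indexed): sum_{i<j} t_i + sum_{i<j} tau_i.\<close>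
definition seg_start :: "('a \<times> real) list \<Rightarrow> (nat \<Rightarrow> real) \<Rightarrow> nat \<Rightarrow> real" where
  "seg_start xs g j = (\<Sum>i<j. snd (xs ! i)) + (\<Sum>i<j. g i)"

text \<open>The gluing times are given by a
  function of the (finite, nonempty) collection; g xs i is the gap between entries i and i+1
  (0-indexed), so it must only depend on the first i+2 entries.\<close>
definition W_spec :: "(real \<Rightarrow> 'a::metric_space \<Rightarrow> 'a) \<Rightarrow> ('a \<times> real) set \<Rightarrow> real \<Rightarrow> real \<Rightarrow> bool" where
  "W_spec f G' \<delta> \<tau> \<longleftrightarrow> (\<exists>g :: ('a \<times> real) list \<Rightarrow> nat \<Rightarrow> real.
     (\<forall>xs. xs \<noteq> [] \<and> set xs \<subseteq> G' \<longrightarrow>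
        (\<forall>i. i + 1 < length xs \<longrightarrow> 0 \<le> g xs i \<and> g xs i \<le> \<tau>) \<and>
        (\<exists>y. \<forall>j < length xs.
            bowen_dist f (snd (xs ! j)) (f (seg_start xs (g xs) j) y) (fst (xs ! j)) < \<delta>)) \<and>
     (\<forall>xs ys j. xs \<noteq> [] \<and> set xs \<subseteq> G' \<and> ys \<noteq> [] \<and> set ys \<subseteq> G' \<and>
        j \<le> length xs \<and> j \<le> length ys \<and> take j xs = take j ys \<longrightarrow>
        (\<forall>i. i + 1 < j \<longrightarrow> g xs i = g ys i)))"

definition bowen_property :: "(real \<Rightarrow> 'a::metric_space \<Rightarrow> 'a) \<Rightarrow> ('a \<Rightarrow> real) \<Rightarrow> ('a \<times> real) set \<Rightarrow> real \<Rightarrow> bool" where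
  "bowen_property f \<phi> G \<zeta> \<longleftrightarrow> (\<exists>K. \<forall>x t. (x, t) \<in> G \<longrightarrow>
      (\<forall>y \<in> bowen_ball f t x \<zeta>. \<bar>birkhoff_int f \<phi> x t - birkhoff_int f \<phi> y t\<bar> \<le> K))"

end

theory Submission
  imports Defs
begin


lemma compact_dist_bound:
  assumes "compact (UNIV :: 'a::metric_space set)"
  obtains D where "\<And>x y::'a. dist x y \<le> D"
proof -
  have "bounded (UNIV::'a set)" using assms compact_imp_bounded by blast
  then obtain a e where "\<And>x::'a. dist a x \<le> e" unfolding bounded_def by auto
  then have "\<And>x y::'a. dist x y \<le> 2*e"
  proof -
    fix x y :: 'a
    have "dist x y \<le> dist x a + dist y a" by (rule dist_triangle2)
    also have "\<dots> \<le> e + e" using \<open>\<And>x::'a. dist a x \<le> e\<close>[of x] \<open>\<And>x::'a. dist a x \<le> e\<close>[of y] by (simp add: dist_commute)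
    finally show "dist x y \<le> 2*e" by simp
  qed
  then show ?thesis using that by blast
qed

lemma bowen_bdd:
  fixes f :: "real \<Rightarrow> 'a::metric_space \<Rightarrow> 'a"
  assumes "compact (UNIV :: 'a::metric_space set)"
  shows "bdd_above ((\<lambda>s. dist (f s x) (f s (y::'a))) ` S)"
proof -
  obtain D where "\<And>x y::'a. dist x y \<le> D" using compact_dist_bound[OF assms] by blast
  then show ?thesis by (intro bdd_aboveI2[of _ _ D]) auto
qed

lemma bowen_ge:
  fixes f :: "real \<Rightarrow> 'a::metric_space \<Rightarrow> 'a"
  assumes "compact (UNIV :: 'a::metric_space set)" "s \<in> {0..t}"
  shows "dist (f s x) (f s (y::'a)) \<le> bowen_dist f t x y"
  unfolding bowen_dist_def using assms bowen_bdd[OF assms(1)]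
  by (intro cSUP_upper) auto

lemma bowen_nonneg:
  fixes f :: "real \<Rightarrow> 'a::metric_space \<Rightarrow> 'a"
  assumes "compact (UNIV :: 'a::metric_space set)" "0 \<le> t"
  shows "0 \<le> bowen_dist f t x (y::'a)"
proof -
  have "dist (f 0 x) (f 0 y) \<le> bowen_dist f t x y" by (rule bowen_ge[OF assms(1)]) (use assms(2) in auto)
  then show ?thesis using zero_le_dist[of "f 0 x" "f 0 y"] by linarith
qed

lemma bowen_le:
  assumes "0 \<le> t" "\<And>s. s \<in> {0..t} \<Longrightarrow> dist (f s x) (f s (y::'a::metric_space)) \<le> c"
  shows "bowen_dist f t x y \<le> c"
  unfolding bowen_dist_def using assms by (intro cSUP_least) auto

lemma bowen_sym: "bowen_dist f t x y = bowen_dist f t y x"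
  unfolding bowen_dist_def by (simp add: dist_commute)

lemma Phi0:
  fixes f :: "real \<Rightarrow> 'a::metric_space \<Rightarrow> 'a"
  assumes "compact (UNIV :: 'a::metric_space set)" "0 \<le> t"
  shows "Phi f \<phi> 0 (x::'a) t = birkhoff_int f \<phi> x t"
proof -
  have "bowen_ball f t x 0 = {}" unfolding bowen_ball_def using bowen_nonneg[OF assms] by (auto simp: not_less)
  then show ?thesis unfolding Phi_def by simp
qed



lemma flow_uc:
  assumes "compact (UNIV :: 'a::metric_space set)" "is_cont_flow f" "e > 0"
  shows "\<exists>d>0. \<forall>p\<in>{0..L}\<times>(UNIV::'a set). \<forall>q\<in>{0..L}\<times>(UNIV::'a set).
           dist q p < d \<longrightarrow> dist (f (fst q) (snd q)) (f (fst p) (snd p)) < e"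
proof -
  have c: "continuous_on UNIV (\<lambda>p. f (fst p) (snd p))" using assms(2) unfolding is_cont_flow_def by blast
  have "compact ({0..L}\<times>(UNIV::'a set))" using assms(1) by (simp add: compact_Times)
  moreover have "continuous_on ({0..L}\<times>(UNIV::'a set)) (\<lambda>p. f (fst p) (snd p))"
    using c continuous_on_subset by blast
  ultimately have "uniformly_continuous_on ({0..L}\<times>(UNIV::'a set)) (\<lambda>p. f (fst p) (snd p))"
    using compact_uniformly_continuous by blast
  then show ?thesis unfolding uniformly_continuous_on_def using assms(3) by blast
qed

lemma flow_shift_uc:
  assumes "compact (UNIV :: 'a::metric_space set)" "is_cont_flow f" "\<eta> > 0"
  shows "\<exists>\<epsilon>>0. \<forall>(z::'a) h. 0 \<le> h \<and> h < \<epsilon> \<longrightarrow> dist (f h z) z < \<eta>"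
proof -
  obtain d where d: "d > 0" and H: "\<forall>p\<in>{0..1}\<times>(UNIV::'a set). \<forall>q\<in>{0..1}\<times>(UNIV::'a set).
           dist q p < d \<longrightarrow> dist (f (fst q) (snd q)) (f (fst p) (snd p)) < \<eta>"
    using flow_uc[OF assms, of 1] by blast
  have f0: "\<And>x. f 0 x = x" using assms(2) unfolding is_cont_flow_def by blast
  show ?thesis
  proof (intro exI[of _ "min d 1"] conjI allI impI)
    fix z :: 'a and h :: real assume "0 \<le> h \<and> h < min d 1"
    then have "dist (h, z) (0, z) < d" "(h,z) \<in> {0..1}\<times>(UNIV::'a set)" "(0::real,z) \<in> {0..1}\<times>(UNIV::'a set)"
      by (auto simp: dist_Pair_Pair)
    then show "dist (f h z) z < \<eta>" using H f0 by fastforce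
  qed (use d in auto)
qed

lemma flow_space_uc:
  assumes "compact (UNIV :: 'a::metric_space set)" "is_cont_flow f" "\<theta> > 0"
  shows "\<exists>\<rho>>0. \<forall>(x::'a) y. dist x y < \<rho> \<longrightarrow> (\<forall>s\<in>{0..T}. dist (f s x) (f s y) < \<theta>)"
proof -
  obtain d where d: "d > 0" and H: "\<forall>p\<in>{0..T}\<times>(UNIV::'a set). \<forall>q\<in>{0..T}\<times>(UNIV::'a set).
           dist q p < d \<longrightarrow> dist (f (fst q) (snd q)) (f (fst p) (snd p)) < \<theta>"
    using flow_uc[OF assms, of T] by blast
  show ?thesis
  proof (intro exI[of _ d] conjI allI impI ballI)
    fix x y :: 'a and s assume "dist x y < d" "s \<in> {0..T}"
    then have "dist (s, x) (s, y) < d" "(s,x) \<in> {0..T}\<times>(UNIV::'a set)" "(s,y) \<in> {0..T}\<times>(UNIV::'a set)"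
      by (auto simp: dist_Pair_Pair)
    then show "dist (f s x) (f s y) < \<theta>" using H by fastforce
  qed (use d in auto)
qed

lemma sep_card_bound:
  assumes "compact (UNIV :: 'a::metric_space set)" "is_cont_flow f" "\<theta> > 0" "0 \<le> T"
  shows "\<exists>N. \<forall>E::'a set. finite E \<and> separated f T \<theta> E \<longrightarrow> card E \<le> N"
proof -
  obtain \<rho> where r: "\<rho> > 0" and H: "\<forall>(x::'a) y. dist x y < \<rho> \<longrightarrow> (\<forall>s\<in>{0..T}. dist (f s x) (f s y) < \<theta>)"
    using flow_space_uc[OF assms(1-3)] by blast
  obtain D where D: "D \<subseteq> UNIV" "finite D" "(UNIV::'a set) \<subseteq> (\<Union>c\<in>D. ball c (\<rho>/2))"
  proof -
    have "(UNIV::'a set) \<subseteq> (\<Union>c\<in>UNIV. ball c (\<rho>/2))" using r by auto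
    then show ?thesis using compactE_image[OF assms(1), of UNIV "\<lambda>c. ball c (\<rho>/2)"] that by blast
  qed
  show ?thesis
  proof (intro exI[of _ "card D"] allI impI)
    fix E :: "'a set" assume E: "finite E \<and> separated f T \<theta> E"
    define c where "c = (\<lambda>x. SOME d. d \<in> D \<and> x \<in> ball d (\<rho>/2))"
    have c: "c x \<in> D \<and> x \<in> ball (c x) (\<rho>/2)" for x
    proof -
      have "\<exists>d. d \<in> D \<and> x \<in> ball d (\<rho>/2)" using D(3) by blast
      then show ?thesis unfolding c_def by (rule someI_ex)
    qed
    have "inj_on c E"
    proof (rule inj_onI, rule ccontr)
      fix x y assume xy: "x \<in> E" "y \<in> E" "c x = c y" "x \<noteq> y"
      have d1: "dist (c x) x < \<rho>/2" using c[of x] by simp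
      have d2: "dist (c x) y < \<rho>/2" using c[of y] xy(3) by simp
      have "dist x y \<le> dist x (c x) + dist y (c x)" by (rule dist_triangle2)
      then have "dist x y < \<rho>" using d1 d2 by (simp add: dist_commute)
      then have "\<forall>s\<in>{0..T}. dist (f s x) (f s y) < \<theta>" using H by blast
      then have "bowen_dist f T x y \<le> \<theta>" by (intro bowen_le[OF assms(4)]) (simp add: less_imp_le)
      moreover have "bowen_dist f T x y > \<theta>" using E xy unfolding separated_def by blast
      ultimately show False by simp
    qed
    then have "card E = card (c ` E)" by (simp add: card_image)
    also have "\<dots> \<le> card D" using c D(2) by (intro card_mono) auto
    finally show "card E \<le> card D" .
  qed
qed

lemma phi_bound:
  assumes "compact (UNIV :: 'a::metric_space set)" "continuous_on UNIV (\<phi>::'a\<Rightarrow>real)"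
  obtains B where "B \<ge> 0" "\<And>x. \<bar>\<phi> x\<bar> \<le> B"
proof -
  have "compact (\<phi> ` UNIV)" using assms compact_continuous_image by blast
  then have "bounded (\<phi> ` UNIV)" by (rule compact_imp_bounded)
  then obtain B where "\<And>x. \<bar>\<phi> x\<bar> \<le> B" unfolding bounded_iff by auto
  moreover then have "B \<ge> 0" by (meson abs_ge_zero order.trans)
  ultimately show ?thesis using that by blast
qed

lemma orbit_cont:
  assumes "is_cont_flow f" "continuous_on UNIV (\<phi>::'a::metric_space\<Rightarrow>real)"
  shows "continuous_on S (\<lambda>s. \<phi> (f s y))"
proof -
  have c: "continuous_on UNIV (\<lambda>p. f (fst p) (snd p))" using assms(1) unfolding is_cont_flow_def by blast
  have "continuous_on UNIV (\<lambda>s. f s y)"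
    using continuous_on_compose2[OF c, of UNIV "\<lambda>s. (s,y)"] by (simp add: continuous_on_Pair continuous_on_id continuous_on_const)
  then have "continuous_on UNIV (\<lambda>s. \<phi> (f s y))"
    using continuous_on_compose2[OF assms(2)] by blast
  then show ?thesis using continuous_on_subset by blast
qed

lemma orbit_integrable:
  assumes "is_cont_flow f" "continuous_on UNIV (\<phi>::'a::metric_space\<Rightarrow>real)"
  shows "(\<lambda>s. \<phi> (f s y)) integrable_on {a..b}"
  using orbit_cont[OF assms] integrable_continuous_interval by blast

lemma birk_bound:
  assumes "is_cont_flow f" "continuous_on UNIV (\<phi>::'a::metric_space\<Rightarrow>real)" "\<And>x. \<bar>\<phi> x\<bar> \<le> B" "0 \<le> t"
  shows "birkhoff_int f \<phi> y t \<le> B * t"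
proof -
  have "birkhoff_int f \<phi> y t \<le> integral {0..t} (\<lambda>s. B)" unfolding birkhoff_int_def
    using assms by (intro integral_le orbit_integrable) (auto simp: abs_le_iff)
  then show ?thesis using assms(4) by (simp add: mult.commute)
qed



lemma int_lower:
  fixes h :: "real \<Rightarrow> real"
  assumes "continuous_on UNIV h" "\<forall>v. -B \<le> h v" "lo \<le> hi"
  shows "- B * (hi - lo) \<le> integral {lo..hi} h"
proof -
  have "integral {lo..hi} (\<lambda>_. -B) \<le> integral {lo..hi} h"
    using assms by (intro integral_le integrable_continuous_interval continuous_on_subset[OF assms(1)]) auto
  then show ?thesis using assms(3) by (simp add: mult.commute)
qed

lemma int_comb:
  fixes h :: "real \<Rightarrow> real"
  assumes "continuous_on UNIV h" "a \<le> c" "c \<le> b"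
  shows "integral {a..b} h = integral {a..c} h + integral {c..b} h"
proof -
  have "h integrable_on {a..b}" using continuous_on_subset[OF assms(1)] by (intro integrable_continuous_interval) auto
  then show ?thesis using Henstock_Kurzweil_Integration.integral_combine[OF assms(2,3)] by metis
qed

lemma seg_integral:
  fixes h :: "real \<Rightarrow> real" and a t :: "nat \<Rightarrow> real"
  assumes cont: "continuous_on UNIV h" and hb: "\<forall>v. -B \<le> h v"
    and a0: "0 \<le> a 0" and step: "\<forall>j. Suc j < k \<longrightarrow> a j + t j \<le> a (Suc j)"
    and tpos: "\<forall>j<k. 0 \<le> t j" and k: "1 \<le> k" and en: "a (k-1) + t (k-1) \<le> T"
  shows "(\<Sum>j<k. integral {a j..a j + t j} h) - B * (T - (\<Sum>j<k. t j)) \<le> integral {0..T} h"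
proof -
  have claim: "n < k \<longrightarrow> 0 \<le> a n \<and>
     (\<Sum>j<Suc n. integral {a j..a j + t j} h) - B * (a n + t n - (\<Sum>j<Suc n. t j)) \<le> integral {0..a n + t n} h" for n
  proof (induction n)
    case 0
    show ?case
    proof
      assume "0 < k"
      have t0: "0 \<le> t 0" using tpos \<open>0 < k\<close> by blast
      have "integral {0..a 0 + t 0} h = integral {0..a 0} h + integral {a 0..a 0 + t 0} h"
        using int_comb[OF cont, of 0 "a 0" "a 0 + t 0"] a0 t0 by simp
      moreover have "- B * (a 0 - 0) \<le> integral {0..a 0} h" using int_lower[OF cont hb a0] .
      ultimately show "0 \<le> a 0 \<and> (\<Sum>j<Suc 0. integral {a j..a j + t j} h) - B * (a 0 + t 0 - (\<Sum>j<Suc 0. t j)) \<le> integral {0..a 0 + t 0} h"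
        using a0 by simp
    qed
  next
    case (Suc n)
    show ?case
    proof
      assume sk: "Suc n < k"
      then have IH: "0 \<le> a n" "(\<Sum>j<Suc n. integral {a j..a j + t j} h) - B * (a n + t n - (\<Sum>j<Suc n. t j)) \<le> integral {0..a n + t n} h"
        using Suc.IH by auto
      have tn: "0 \<le> t n" "0 \<le> t (Suc n)" using tpos sk by auto
      have st: "a n + t n \<le> a (Suc n)" using step sk by blast
      have "integral {0..a (Suc n) + t (Suc n)} h = integral {0..a (Suc n)} h + integral {a (Suc n)..a (Suc n) + t (Suc n)} h"
        using int_comb[OF cont, of 0 "a (Suc n)" "a (Suc n) + t (Suc n)"] IH tn st by simp
      moreover have "integral {0..a (Suc n)} h = integral {0..a n + t n} h + integral {a n + t n..a (Suc n)} h"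
        using int_comb[OF cont, of 0 "a n + t n" "a (Suc n)"] IH tn st by simp
      moreover have "- B * (a (Suc n) - (a n + t n)) \<le> integral {a n + t n..a (Suc n)} h"
        using int_lower[OF cont hb st] .
      ultimately show "0 \<le> a (Suc n) \<and> (\<Sum>j<Suc (Suc n). integral {a j..a j + t j} h) - B * (a (Suc n) + t (Suc n) - (\<Sum>j<Suc (Suc n). t j)) \<le> integral {0..a (Suc n) + t (Suc n)} h"
        using IH tn st by (simp add: algebra_simps)
    qed
  qed
  have kk: "k - 1 < k" "Suc (k - 1) = k" using k by auto
  have C: "0 \<le> a (k-1)" "(\<Sum>j<k. integral {a j..a j + t j} h) - B * (a (k-1) + t (k-1) - (\<Sum>j<k. t j)) \<le> integral {0..a (k-1) + t (k-1)} h"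
    using claim[of "k-1"] kk by auto
  have tk: "0 \<le> t (k-1)" using tpos kk by blast
  have "integral {0..T} h = integral {0..a (k-1) + t (k-1)} h + integral {a (k-1) + t (k-1)..T} h"
    using int_comb[OF cont, of 0 "a (k-1) + t (k-1)" T] C tk en by simp
  moreover have "- B * (T - (a (k-1) + t (k-1))) \<le> integral {a (k-1) + t (k-1)..T} h"
    using int_lower[OF cont hb en] .
  ultimately show ?thesis using C by (simp add: algebra_simps)
qed

lemma birk_shift:
  assumes "is_cont_flow f"
  shows "birkhoff_int f \<phi> (f a y) t = integral {a..a+t} (\<lambda>v. \<phi> (f v y))"
proof -
  have fl: "\<And>s t x. f (s + t) x = f s (f t x)" using assms unfolding is_cont_flow_def by blast
  have "birkhoff_int f \<phi> (f a y) t = integral {0..t} ((\<lambda>v. \<phi> (f v y)) \<circ> (+) a)"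
    unfolding birkhoff_int_def o_def by (simp add: fl add.commute)
  also have "\<dots> = integral {0+a..t+a} (\<lambda>v. \<phi> (f v y))" by (rule integral_shift_Icc_real)
  finally show ?thesis by (simp add: add.commute)
qed

lemma prod_Sup_le:
  fixes A :: "nat \<Rightarrow> real set"
  assumes "\<forall>j<k. A j \<noteq> {}" "\<forall>j<k. bdd_above (A j)" "\<forall>j<k. \<forall>a\<in>A j. 0 \<le> a" "0 \<le> M"
    "\<forall>x. (\<forall>j<k. x j \<in> A j) \<longrightarrow> (\<Prod>j<k. x j) \<le> M"
  shows "(\<Prod>j<k. Sup (A j)) \<le> M"
  using assms
proof (induction k arbitrary: M)
  case 0
  then show ?case by auto
next
  case (Suc k)
  have S0: "0 \<le> Sup (A j)" if jk: "j < Suc k" for j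
  proof -
    obtain a where "a \<in> A j" using Suc.prems(1) jk by blast
    then show ?thesis using Suc.prems(2,3) jk by (meson cSup_upper order.trans)
  qed
  define P where "P = (\<Prod>j<k. Sup (A j))"
  have P0: "0 \<le> P" unfolding P_def using S0 by (intro prod_nonneg) auto
  have Pa: "P * a \<le> M" if a: "a \<in> A k" for a
  proof (cases "a = 0")
    case True then show ?thesis using Suc.prems(4) by simp
  next
    case False
    then have apos: "0 < a" using Suc.prems(3) a by force
    have "\<forall>x. (\<forall>j<k. x j \<in> A j) \<longrightarrow> (\<Prod>j<k. x j) \<le> M / a"
    proof (intro allI impI)
      fix x assume x: "\<forall>j<k. x j \<in> A j"
      have "\<forall>j<Suc k. (x(k := a)) j \<in> A j" using x a by (auto simp: less_Suc_eq)
      then have "(\<Prod>j<Suc k. (x(k := a)) j) \<le> M" using Suc.prems(5) by blast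
      moreover have "(\<Prod>j<k. (x(k := a)) j) = (\<Prod>j<k. x j)" by (rule prod.cong) auto
      then have "(\<Prod>j<Suc k. (x(k := a)) j) = (\<Prod>j<k. x j) * a" by simp
      ultimately show "(\<Prod>j<k. x j) \<le> M / a" using apos by (simp add: pos_le_divide_eq)
    qed
    moreover have h1: "\<forall>j<k. A j \<noteq> {}" "\<forall>j<k. bdd_above (A j)" "\<forall>j<k. \<forall>a\<in>A j. 0 \<le> a"
      using Suc.prems(1-3) less_Suc_eq by auto
    moreover have "0 \<le> M / a" using Suc.prems(4) apos by simp
    ultimately have "P \<le> M / a" unfolding P_def using Suc.IH[of "M/a"] by blast
    then show ?thesis using apos by (simp add: pos_le_divide_eq)
  qed
  have "P * Sup (A k) \<le> M"
  proof (cases "P = 0")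
    case True then show ?thesis using Suc.prems(4) by simp
  next
    case False
    then have Ppos: "0 < P" using P0 by simp
    have "Sup (A k) \<le> M / P" using Suc.prems(1) Pa Ppos
      by (intro cSup_least) (auto simp: pos_le_divide_eq mult.commute)
    then show ?thesis using Ppos by (simp add: pos_le_divide_eq mult.commute)
  qed
  then show ?case by (simp add: P_def)
qed



lemma Lam_bdd:
  fixes f :: "real \<Rightarrow> 'a::metric_space \<Rightarrow> 'a"
  assumes "compact (UNIV :: 'a set)" "is_cont_flow f" "continuous_on UNIV \<phi>" "\<theta> > 0" "0 \<le> T"
  shows "bdd_above {(\<Sum>x\<in>E. exp (Phi f \<phi> 0 x T)) | E. finite E \<and> E \<subseteq> S \<and> separated f T \<theta> E}"
proof -
  obtain B where B: "B \<ge> 0" "\<And>x. \<bar>\<phi> x\<bar> \<le> B" using phi_bound[OF assms(1,3)] by blast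
  obtain N where N: "\<forall>E::'a set. finite E \<and> separated f T \<theta> E \<longrightarrow> card E \<le> N"
    using sep_card_bound[OF assms(1,2,4,5)] by blast
  show ?thesis
  proof (rule bdd_aboveI, safe)
    fix E :: "'a set" assume E: "finite E" "E \<subseteq> S" "separated f T \<theta> E"
    have "\<forall>x\<in>E. exp (Phi f \<phi> 0 x T) \<le> exp (B * T)"
      using Phi0[OF assms(1,5)] birk_bound[OF assms(2,3) B(2) assms(5)] by simp
    then have "(\<Sum>x\<in>E. exp (Phi f \<phi> 0 x T)) \<le> real (card E) * exp (B * T)"
      by (intro sum_bounded_above) auto
    also have "\<dots> \<le> real N * exp (B * T)" using N E by (intro mult_right_mono) auto
    finally show "(\<Sum>x\<in>E. exp (Phi f \<phi> 0 x T)) \<le> real N * exp (B * T)" .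
  qed
qed

lemma Lam_set_nonempty:
  "0 \<in> {(\<Sum>x\<in>E. exp (Phi f \<phi> 0 x T)) | E. finite E \<and> E \<subseteq> S \<and> separated f T \<theta> E}"
  by (rule CollectI, rule exI[of _ "{}"]) (simp add: separated_def)

lemma Lam_empty:
  assumes "slice C T = {}"
  shows "Lambda f \<phi> C \<theta> 0 T = 0"
proof -
  have "{(\<Sum>x\<in>E. exp (Phi f \<phi> 0 x T)) | E. finite E \<and> E \<subseteq> slice C T \<and> separated f T \<theta> E} = {0}"
    using assms by (auto simp: separated_def)
  then show ?thesis unfolding Lambda_def by simp
qed

lemma Lam_nonneg:
  fixes f :: "real \<Rightarrow> 'a::metric_space \<Rightarrow> 'a"
  assumes "compact (UNIV :: 'a set)" "is_cont_flow f" "continuous_on UNIV \<phi>" "\<theta> > 0"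
    and "C \<subseteq> UNIV \<times> {0..}"
  shows "0 \<le> Lambda f \<phi> C \<theta> 0 T"
proof (cases "slice C T = {}")
  case True then show ?thesis by (simp add: Lam_empty[OF True])
next
  case False
  then have "0 \<le> T" using assms(5) unfolding slice_def by auto
  then show ?thesis unfolding Lambda_def
    by (intro cSup_upper Lam_set_nonempty Lam_bdd[OF assms(1-4)])
qed

lemma floor_close:
  fixes a b e :: real
  assumes "e > 0" "\<lfloor>a / e\<rfloor> = \<lfloor>b / e\<rfloor>"
  shows "\<bar>a - b\<bar> < e"
proof -
  have "\<bar>a / e - b / e\<bar> < 1" using assms(2) floor_correct[of "a/e"] floor_correct[of "b/e"]
    by (simp add: abs_less_iff) linarith
  then have "\<bar>(a - b) / e\<bar> < 1" by (simp add: diff_divide_distrib)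
  then show ?thesis using assms(1) by (simp add: abs_divide divide_less_eq)
qed



lemma core:
  fixes f :: "real \<Rightarrow> 'a::metric_space \<Rightarrow> 'a" and \<phi> :: "'a \<Rightarrow> real"
    and G G' :: "('a \<times> real) set" and g :: "('a \<times> real) list \<Rightarrow> nat \<Rightarrow> real"
    and E :: "nat \<Rightarrow> 'a set" and t :: "nat \<Rightarrow> real"
  assumes cpt: "compact (UNIV :: 'a set)" and flow: "is_cont_flow f" and phic: "continuous_on UNIV \<phi>"
    and G'def: "G' = G \<inter> (UNIV \<times> {T0..})"
    and dpos: "\<delta> > 0" and zd: "\<zeta> > \<delta>" and gz: "\<gamma> > 2 * \<zeta>"
    and gspec: "\<forall>xs. xs \<noteq> [] \<and> set xs \<subseteq> G' \<longrightarrow>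
        (\<forall>i. i + 1 < length xs \<longrightarrow> 0 \<le> g xs i \<and> g xs i \<le> \<tau>) \<and>
        (\<exists>y. \<forall>j < length xs.
            bowen_dist f (snd (xs ! j)) (f (seg_start xs (g xs) j) y) (fst (xs ! j)) < \<delta>)"
    and gcons: "\<forall>xs ys j. xs \<noteq> [] \<and> set xs \<subseteq> G' \<and> ys \<noteq> [] \<and> set ys \<subseteq> G' \<and>
        j \<le> length xs \<and> j \<le> length ys \<and> take j xs = take j ys \<longrightarrow>
        (\<forall>i. i + 1 < j \<longrightarrow> g xs i = g ys i)"
    and Kb: "\<forall>x t. (x, t) \<in> G \<longrightarrow>
      (\<forall>y \<in> bowen_ball f t x \<zeta>. \<bar>birkhoff_int f \<phi> x t - birkhoff_int f \<phi> y t\<bar> \<le> K)"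
    and K0: "K \<ge> 0" and B0: "B \<ge> 0" and Bb: "\<And>x. \<bar>\<phi> x\<bar> \<le> B"
    and eps: "\<epsilon> > 0" and epsH: "\<forall>(z::'a) h. 0 \<le> h \<and> h < \<epsilon> \<longrightarrow> dist (f h z) z < \<gamma> - 2 * \<zeta>"
    and tau0: "\<tau> \<ge> 0"
    and k1: "k \<ge> 1" and tT0: "\<forall>j<k. t j \<ge> T0" and tpos: "\<forall>j<k. t j \<ge> 0"
    and Efin: "\<forall>j<k. finite (E j)" and Esub: "\<forall>j<k. E j \<subseteq> slice G (t j)"
    and Esep: "\<forall>j<k. separated f (t j) \<gamma> (E j)"
  shows "(\<Prod>j<k. \<Sum>z\<in>E j. exp (Phi f \<phi> 0 z (t j)))
     \<le> (exp (K + \<tau> * B) * real (nat (\<lfloor>\<tau> / \<epsilon>\<rfloor> + 1) + 1)) ^ k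
        * Lambda f \<phi> (UNIV \<times> {0..}) (\<zeta> - \<delta>) 0 ((\<Sum>j<k. t j) + (real k - 1) * \<tau>)"
proof -
  define T where "T = (\<Sum>j<k. t j) + (real k - 1) * \<tau>"
  define \<theta> where "\<theta> = \<zeta> - \<delta>"
  define D where "D = exp (K + \<tau> * B)"
  define N where "N = nat (\<lfloor>\<tau> / \<epsilon>\<rfloor> + 1)"
  define LR where "LR = Lambda f \<phi> (UNIV \<times> {0..}) \<theta> 0 T"
  have th0: "\<theta> > 0" using zd by (simp add: \<theta>_def)
  have fl: "\<And>s t x. f (s + t) x = f s (f t x)" using flow unfolding is_cont_flow_def by blast
  have km: "real (k - 1) = real k - 1" using k1 by (simp add: of_nat_diff)
  have T0: "0 \<le> T" unfolding T_def using tpos k1 tau0 by (intro add_nonneg_nonneg sum_nonneg mult_nonneg_nonneg) auto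
  have LR0: "0 \<le> LR" unfolding LR_def by (rule Lam_nonneg[OF cpt flow phic th0]) auto
  define PE :: "(nat \<Rightarrow> 'a) set" where "PE = PiE {..<k} E"
  have PEfin: "finite PE" unfolding PE_def using Efin by (intro finite_PiE) auto
  define xsl :: "(nat \<Rightarrow> 'a) \<Rightarrow> ('a \<times> real) list" where "xsl = (\<lambda>c. map (\<lambda>j. (c j, t j)) [0..<k])"
  have xsl_len: "length (xsl c) = k" for c by (simp add: xsl_def)
  have xsl_nth: "j < k \<Longrightarrow> xsl c ! j = (c j, t j)" for c j by (simp add: xsl_def)
  have xsl_ok: "xsl c \<noteq> [] \<and> set (xsl c) \<subseteq> G'" if c: "c \<in> PE" for c
  proof -
    have "\<forall>j<k. (c j, t j) \<in> G'" using c Esub tT0 unfolding PE_def G'def slice_def by (auto simp: PiE_iff)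
    then show ?thesis using k1 by (auto simp: xsl_def)
  qed
  define gg :: "(nat \<Rightarrow> 'a) \<Rightarrow> nat \<Rightarrow> real" where "gg = (\<lambda>c. g (xsl c))"
  have gg_b: "0 \<le> gg c i \<and> gg c i \<le> \<tau>" if "c \<in> PE" "i + 1 < k" for c i
    using gspec xsl_ok[OF that(1)] that(2) xsl_len unfolding gg_def by metis
  define a :: "(nat \<Rightarrow> 'a) \<Rightarrow> nat \<Rightarrow> real" where "a = (\<lambda>c j. seg_start (xsl c) (gg c) j)"
  have a_eq: "a c j = (\<Sum>i<j. t i) + (\<Sum>i<j. gg c i)" if "j \<le> k" for c j
    unfolding a_def seg_start_def using that by (auto intro!: sum.cong simp: xsl_nth)
  have a_nonneg: "0 \<le> a c j" if cj: "c \<in> PE" "j < k" for c j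
  proof -
    have "0 \<le> (\<Sum>i<j. t i)" using tpos cj by (intro sum_nonneg) auto
    moreover have "0 \<le> (\<Sum>i<j. gg c i)" using gg_b cj by (intro sum_nonneg) auto
    ultimately show ?thesis using a_eq[of j c] cj by simp
  qed
  have a_end: "a c j + t j \<le> T" if cj: "c \<in> PE" "j < k" for c j
  proof -
    have "a c j + t j = (\<Sum>i<Suc j. t i) + (\<Sum>i<j. gg c i)" using a_eq[of j c] cj by simp
    moreover have "(\<Sum>i<Suc j. t i) \<le> (\<Sum>i<k. t i)" using cj tpos by (intro sum_mono2) auto
    moreover have "(\<Sum>i<j. gg c i) \<le> real (card {..<j}) * \<tau>" using gg_b cj by (intro sum_bounded_above) auto
    moreover have "real (card {..<j}) * \<tau> \<le> (real k - 1) * \<tau>" using cj tau0 by (intro mult_right_mono) auto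
    ultimately show ?thesis unfolding T_def by linarith
  qed
  define yy :: "(nat \<Rightarrow> 'a) \<Rightarrow> 'a" where "yy = (\<lambda>c. SOME y. \<forall>j<k. bowen_dist f (t j) (f (a c j) y) (c j) < \<delta>)"
  have yy: "\<forall>j<k. bowen_dist f (t j) (f (a c j) (yy c)) (c j) < \<delta>" if cP: "c \<in> PE" for c
  proof -
    obtain y where y: "\<forall>j<length (xsl c). bowen_dist f (snd (xsl c ! j)) (f (seg_start (xsl c) (g (xsl c)) j) y) (fst (xsl c ! j)) < \<delta>"
      using gspec xsl_ok[OF cP] by blast
    have "\<forall>j<k. bowen_dist f (t j) (f (a c j) y) (c j) < \<delta>"
    proof (intro allI impI)
      fix j assume "j < k"
      then show "bowen_dist f (t j) (f (a c j) y) (c j) < \<delta>" using y xsl_len[of c] xsl_nth[of j c]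
        unfolding a_def gg_def by auto
    qed
    then have "\<exists>y. \<forall>j<k. bowen_dist f (t j) (f (a c j) y) (c j) < \<delta>" by blast
    then show ?thesis unfolding yy_def by (rule someI_ex)
  qed
  have weight: "(\<Prod>j<k. exp (birkhoff_int f \<phi> (c j) (t j))) \<le> D ^ k * exp (birkhoff_int f \<phi> (yy c) T)"
    if cP: "c \<in> PE" for c
  proof -
    define h where "h = (\<lambda>v. \<phi> (f v (yy c)))"
    have hc: "continuous_on UNIV h" unfolding h_def by (rule orbit_cont[OF flow phic])
    have hb: "\<forall>v. -B \<le> h v" unfolding h_def using Bb by (metis abs_le_iff minus_le_iff)
    have a0: "0 \<le> a c 0" using a_eq[of 0 c] by simp
    have st: "\<forall>j. Suc j < k \<longrightarrow> a c j + t j \<le> a c (Suc j)"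
    proof (intro allI impI)
      fix j assume "Suc j < k"
      then have "a c (Suc j) = a c j + t j + gg c j" "0 \<le> gg c j" using a_eq[of j c] a_eq[of "Suc j" c] gg_b[OF cP, of j] by auto
      then show "a c j + t j \<le> a c (Suc j)" by simp
    qed
    have en: "a c (k-1) + t (k-1) \<le> T" using a_end[OF cP, of "k-1"] k1 by simp
    have SI: "(\<Sum>j<k. integral {a c j..a c j + t j} h) - B * (T - (\<Sum>j<k. t j)) \<le> integral {0..T} h"
      by (rule seg_integral[OF hc hb a0 st tpos k1 en])
    have bw: "birkhoff_int f \<phi> (c j) (t j) - K \<le> integral {a c j..a c j + t j} h" if jk: "j < k" for j
    proof -
      have "integral {a c j..a c j + t j} h = birkhoff_int f \<phi> (f (a c j) (yy c)) (t j)"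
        unfolding h_def by (rule birk_shift[OF flow, symmetric])
      moreover have "(c j, t j) \<in> G" using cP Esub jk unfolding PE_def slice_def by (auto simp: PiE_iff)
      moreover have "f (a c j) (yy c) \<in> bowen_ball f (t j) (c j) \<zeta>"
      proof -
        have "bowen_dist f (t j) (f (a c j) (yy c)) (c j) < \<delta>" using yy[OF cP] jk by blast
        then have "bowen_dist f (t j) (c j) (f (a c j) (yy c)) < \<zeta>" using zd bowen_sym by (metis less_trans)
        then show ?thesis unfolding bowen_ball_def by simp
      qed
      ultimately have "\<bar>birkhoff_int f \<phi> (c j) (t j) - birkhoff_int f \<phi> (f (a c j) (yy c)) (t j)\<bar> \<le> K"
        using Kb by blast
      then show ?thesis using \<open>integral {a c j..a c j + t j} h = birkhoff_int f \<phi> (f (a c j) (yy c)) (t j)\<close>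
        by linarith
    qed
    have "(\<Sum>j<k. birkhoff_int f \<phi> (c j) (t j) - K) \<le> (\<Sum>j<k. integral {a c j..a c j + t j} h)"
      using bw by (intro sum_mono) auto
    then have S1: "(\<Sum>j<k. birkhoff_int f \<phi> (c j) (t j)) - real k * K \<le> (\<Sum>j<k. integral {a c j..a c j + t j} h)"
      by (simp add: sum_subtractf)
    have "B * (T - (\<Sum>j<k. t j)) \<le> real k * (\<tau> * B)"
      unfolding T_def using B0 tau0 by (simp add: algebra_simps mult_left_mono)
    moreover have "integral {0..T} h = birkhoff_int f \<phi> (yy c) T" unfolding h_def birkhoff_int_def ..
    ultimately have "(\<Sum>j<k. birkhoff_int f \<phi> (c j) (t j)) \<le> real k * (K + \<tau> * B) + birkhoff_int f \<phi> (yy c) T"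
      using S1 SI by (simp add: algebra_simps)
    then have "exp (\<Sum>j<k. birkhoff_int f \<phi> (c j) (t j)) \<le> exp (real k * (K + \<tau> * B) + birkhoff_int f \<phi> (yy c) T)"
      by simp
    moreover have "exp (\<Sum>j<k. birkhoff_int f \<phi> (c j) (t j)) = (\<Prod>j<k. exp (birkhoff_int f \<phi> (c j) (t j)))"
      by (rule exp_sum) simp
    moreover have "exp (real k * (K + \<tau> * B) + birkhoff_int f \<phi> (yy c) T) = D ^ k * exp (birkhoff_int f \<phi> (yy c) T)"
      unfolding D_def by (simp only: exp_add exp_of_nat_mult)
    ultimately show ?thesis by simp
  qed
  define bin :: "(nat \<Rightarrow> 'a) \<Rightarrow> int list" where "bin = (\<lambda>c. map (\<lambda>i. \<lfloor>gg c i / \<epsilon>\<rfloor>) [0..<k-1])"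
  define Bset where "Bset = {l. set l \<subseteq> {0..\<lfloor>\<tau> / \<epsilon>\<rfloor>} \<and> length l = k - 1}"
  have Bfin: "finite Bset" unfolding Bset_def by (intro finite_lists_length_eq) auto
  have Bcard: "card Bset = N ^ (k - 1)" unfolding Bset_def N_def by (simp add: card_lists_length_eq)
  have binB: "bin ` PE \<subseteq> Bset"
  proof
    fix l assume "l \<in> bin ` PE"
    then obtain c where cP: "c \<in> PE" and l: "l = bin c" by blast
    have "\<lfloor>gg c i / \<epsilon>\<rfloor> \<in> {0..\<lfloor>\<tau> / \<epsilon>\<rfloor>}" if "i < k - 1" for i
    proof -
      have "0 \<le> gg c i" "gg c i \<le> \<tau>" using gg_b[OF cP, of i] that by auto
      then show ?thesis using eps by (auto intro!: floor_mono divide_right_mono)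
    qed
    then show "l \<in> Bset" unfolding Bset_def l bin_def by auto
  qed
  have sepclass: "\<theta> < bowen_dist f T (yy c) (yy c')"
    if cP: "c \<in> PE" and cP': "c' \<in> PE" and bb: "bin c = bin c'" and cne: "c \<noteq> c'" for c c'
  proof (rule ccontr)
    assume "\<not> \<theta> < bowen_dist f T (yy c) (yy c')"
    then have close: "bowen_dist f T (yy c) (yy c') \<le> \<theta>" by simp
    have ex: "\<exists>j. c j \<noteq> c' j" using cne by (meson ext)
    define j where "j = (LEAST j. c j \<noteq> c' j)"
    have cj: "c j \<noteq> c' j" unfolding j_def using ex by (rule LeastI_ex)
    have pre: "c i = c' i" if ij: "i < j" for i
    proof -
      have "\<not> (c i \<noteq> c' i)" using ij unfolding j_def by (rule not_less_Least)
      then show ?thesis by blast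
    qed
    have jk: "j < k"
    proof (rule ccontr)
      assume "\<not> j < k"
      then have jn: "j \<notin> {..<k}" by simp
      have "c j = undefined" using PiE_arb[OF cP[unfolded PE_def] jn] .
      moreover have "c' j = undefined" using PiE_arb[OF cP'[unfolded PE_def] jn] .
      ultimately have "c j = c' j" by simp
      then show False using cj by simp
    qed
    have tk: "take j (xsl c) = take j (xsl c')"
      unfolding xsl_def take_map using jk pre by (auto intro!: map_cong)
    have gsame: "\<forall>i. i + 1 < j \<longrightarrow> gg c i = gg c' i"
      using gcons xsl_ok[OF cP] xsl_ok[OF cP'] xsl_len[of c] xsl_len[of c'] jk tk unfolding gg_def
      by (metis less_imp_le)
    define s where "s = a c j"
    define s' where "s' = a c' j"
    have sdiff: "\<bar>s - s'\<bar> < \<epsilon>"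
    proof (cases j)
      case 0 then show ?thesis using a_eq[of 0 c] a_eq[of 0 c'] eps by (simp add: s_def s'_def)
    next
      case (Suc m)
      have e1: "(\<Sum>i<m. gg c i) = (\<Sum>i<m. gg c' i)" using gsame Suc by (intro sum.cong) auto
      have mk: "m < k - 1" using Suc jk by simp
      have "bin c ! m = \<lfloor>gg c m / \<epsilon>\<rfloor>" "bin c' ! m = \<lfloor>gg c' m / \<epsilon>\<rfloor>"
        using mk unfolding bin_def by auto
      then have "\<bar>gg c m - gg c' m\<bar> < \<epsilon>" using bb floor_close[OF eps] by metis
      moreover have "s = (\<Sum>i<j. t i) + (\<Sum>i<m. gg c i) + gg c m" "s' = (\<Sum>i<j. t i) + (\<Sum>i<m. gg c' i) + gg c' m"
        using a_eq[of j c] a_eq[of j c'] jk Suc by (auto simp: s_def s'_def)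
      ultimately show ?thesis using e1 by simp
    qed
    define y where "y = yy c"
    define y' where "y' = yy c'"
    have h1: "bowen_dist f (t j) (f s y) (c j) < \<delta>" using yy[OF cP] jk unfolding s_def y_def by blast
    have h2: "bowen_dist f (t j) (f s' y') (c' j) < \<delta>" using yy[OF cP'] jk unfolding s'_def y'_def by blast
    have s0: "0 \<le> s" "0 \<le> s'" using a_nonneg[OF cP jk] a_nonneg[OF cP' jk] by (auto simp: s_def s'_def)
    have sT: "s' + t j \<le> T" using a_end[OF cP' jk] by (simp add: s'_def)
    have tj0: "0 \<le> t j" using tpos jk by blast
    have pt: "dist (f u (c j)) (f u (c' j)) \<le> \<delta> + (\<gamma> - 2 * \<zeta>) + \<theta> + \<delta>" if u: "u \<in> {0..t j}" for u
    proof -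
      have d1: "dist (f u (c j)) (f (u + s) y) < \<delta>"
      proof -
        have "dist (f u (f s y)) (f u (c j)) \<le> bowen_dist f (t j) (f s y) (c j)" by (rule bowen_ge[OF cpt u])
        moreover have e: "f (u + s) y = f u (f s y)" by (rule fl)
        moreover have "dist (f u (c j)) (f u (f s y)) = dist (f u (f s y)) (f u (c j))" by (rule dist_commute)
        ultimately show ?thesis using h1 unfolding e by linarith
      qed
      have d2: "dist (f (u + s) y) (f (u + s') y) < \<gamma> - 2 * \<zeta>"
      proof (cases "s \<le> s'")
        case True
        have "f ((s' - s) + (u + s)) y = f (s' - s) (f (u + s) y)" by (rule fl)
        moreover have "(s' - s) + (u + s) = u + s'" by simp
        ultimately have e: "f (u + s') y = f (s' - s) (f (u + s) y)" by metis
        have "0 \<le> s' - s \<and> s' - s < \<epsilon>" using True sdiff by linarith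
        then have "dist (f (s' - s) (f (u + s) y)) (f (u + s) y) < \<gamma> - 2 * \<zeta>"
          using epsH by blast
        then show ?thesis unfolding e by (simp only: dist_commute)
      next
        case False
        have "f ((s - s') + (u + s')) y = f (s - s') (f (u + s') y)" by (rule fl)
        moreover have "(s - s') + (u + s') = u + s" by simp
        ultimately have e: "f (u + s) y = f (s - s') (f (u + s') y)" by metis
        have "0 \<le> s - s' \<and> s - s' < \<epsilon>" using False sdiff by linarith
        then have "dist (f (s - s') (f (u + s') y)) (f (u + s') y) < \<gamma> - 2 * \<zeta>"
          using epsH by blast
        then show ?thesis unfolding e .
      qed
      have d3: "dist (f (u + s') y) (f (u + s') y') \<le> \<theta>"
      proof -
        have "u + s' \<in> {0..T}" using u s0 sT by auto
        then have "dist (f (u + s') y) (f (u + s') y') \<le> bowen_dist f T y y'" by (rule bowen_ge[OF cpt])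
        then show ?thesis using close unfolding y_def y'_def by linarith
      qed
      have d4: "dist (f (u + s') y') (f u (c' j)) < \<delta>"
      proof -
        have "dist (f u (f s' y')) (f u (c' j)) \<le> bowen_dist f (t j) (f s' y') (c' j)" by (rule bowen_ge[OF cpt u])
        moreover have e: "f (u + s') y' = f u (f s' y')" by (rule fl)
        ultimately show ?thesis using h2 unfolding e by linarith
      qed
      have "dist (f u (c j)) (f u (c' j)) \<le> dist (f u (c j)) (f (u + s) y) + dist (f (u + s) y) (f u (c' j))"
        by (rule dist_triangle)
      also have "dist (f (u + s) y) (f u (c' j)) \<le> dist (f (u + s) y) (f (u + s') y) + dist (f (u + s') y) (f u (c' j))"
        by (rule dist_triangle)
      also have "dist (f (u + s') y) (f u (c' j)) \<le> dist (f (u + s') y) (f (u + s') y') + dist (f (u + s') y') (f u (c' j))"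
        by (rule dist_triangle)
      finally show ?thesis using d1 d2 d3 d4 by simp
    qed
    have "bowen_dist f (t j) (c j) (c' j) \<le> \<delta> + (\<gamma> - 2 * \<zeta>) + \<theta> + \<delta>"
      by (rule bowen_le[OF tj0]) (rule pt)
    moreover have "\<gamma> < bowen_dist f (t j) (c j) (c' j)"
    proof -
      have jk': "j \<in> {..<k}" using jk by simp
      have m: "c j \<in> E j" "c' j \<in> E j" using PiE_mem[OF cP[unfolded PE_def] jk'] PiE_mem[OF cP'[unfolded PE_def] jk'] by auto
      have "separated f (t j) \<gamma> (E j)" using Esep jk by blast
      then show ?thesis using m cj unfolding separated_def by blast
    qed
    ultimately show False using zd unfolding \<theta>_def by simp
  qed
  have class_le: "(\<Sum>c\<in>{c. c \<in> PE \<and> bin c = b}. exp (birkhoff_int f \<phi> (yy c) T)) \<le> LR" for b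
  proof -
    define Cl where "Cl = {c. c \<in> PE \<and> bin c = b}"
    have ClD: "c \<in> PE \<and> bin c = b" if "c \<in> Cl" for c using that unfolding Cl_def by blast
    have "Cl \<subseteq> PE" unfolding Cl_def by blast
    then have Clfin: "finite Cl" using PEfin by (rule finite_subset)
    have inj: "inj_on yy Cl"
    proof (rule inj_onI, rule ccontr)
      fix c c' assume cc: "c \<in> Cl" "c' \<in> Cl" "yy c = yy c'" "c \<noteq> c'"
      then have "\<theta> < bowen_dist f T (yy c) (yy c')" using sepclass ClD[OF cc(1)] ClD[OF cc(2)] by metis
      moreover have "bowen_dist f T (yy c) (yy c') \<le> 0" unfolding cc(3) by (rule bowen_le[OF T0]) simp
      ultimately show False using th0 by simp
    qed
    have "(\<Sum>c\<in>Cl. exp (birkhoff_int f \<phi> (yy c) T)) = (\<Sum>z\<in>yy ` Cl. exp (birkhoff_int f \<phi> z T))"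
      using sum.reindex[OF inj, of "\<lambda>z. exp (birkhoff_int f \<phi> z T)"] by simp
    also have "\<dots> = (\<Sum>z\<in>yy ` Cl. exp (Phi f \<phi> 0 z T))" using Phi0[OF cpt T0] by simp
    also have "\<dots> \<le> LR" unfolding LR_def Lambda_def
    proof (rule cSup_upper)
      have "separated f T \<theta> (yy ` Cl)" unfolding separated_def
      proof (intro ballI impI)
        fix z z' assume "z \<in> yy ` Cl" "z' \<in> yy ` Cl" "z \<noteq> z'"
        then obtain c c' where cc: "c \<in> Cl" "c' \<in> Cl" "z = yy c" "z' = yy c'" "c \<noteq> c'" by blast
        then show "\<theta> < bowen_dist f T z z'" using sepclass ClD[OF cc(1)] ClD[OF cc(2)] by metis
      qed
      moreover have "yy ` Cl \<subseteq> slice (UNIV \<times> {0..}) T" using T0 unfolding slice_def by auto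
      ultimately show "(\<Sum>z\<in>yy ` Cl. exp (Phi f \<phi> 0 z T)) \<in> {\<Sum>x\<in>E. exp (Phi f \<phi> 0 x T) |E. finite E \<and> E \<subseteq> slice (UNIV \<times> {0..}) T \<and> separated f T \<theta> E}"
        using Clfin by blast
      show "bdd_above {\<Sum>x\<in>E. exp (Phi f \<phi> 0 x T) |E. finite E \<and> E \<subseteq> slice (UNIV \<times> {0..}) T \<and> separated f T \<theta> E}"
        by (rule Lam_bdd[OF cpt flow phic th0 T0])
    qed
    finally show ?thesis unfolding Cl_def .
  qed
  have "(\<Prod>j<k. \<Sum>z\<in>E j. exp (Phi f \<phi> 0 z (t j))) = (\<Prod>j<k. \<Sum>z\<in>E j. exp (birkhoff_int f \<phi> z (t j)))"
    using Phi0[OF cpt] tpos by (intro prod.cong sum.cong) auto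
  also have "\<dots> = (\<Sum>c\<in>PE. \<Prod>j<k. exp (birkhoff_int f \<phi> (c j) (t j)))"
    unfolding PE_def using Efin by (intro prod_sum_PiE) auto
  also have "\<dots> \<le> (\<Sum>c\<in>PE. D ^ k * exp (birkhoff_int f \<phi> (yy c) T))"
    using weight by (intro sum_mono) auto
  also have "\<dots> = D ^ k * (\<Sum>c\<in>PE. exp (birkhoff_int f \<phi> (yy c) T))"
    by (simp add: sum_distrib_left)
  also have "(\<Sum>c\<in>PE. exp (birkhoff_int f \<phi> (yy c) T))
      = (\<Sum>b\<in>Bset. \<Sum>c\<in>{c. c \<in> PE \<and> bin c = b}. exp (birkhoff_int f \<phi> (yy c) T))"
    using sum.group[OF PEfin Bfin binB, of "\<lambda>c. exp (birkhoff_int f \<phi> (yy c) T)"] by simp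
  also have "\<dots> \<le> (\<Sum>b\<in>Bset. LR)" using class_le by (intro sum_mono) auto
  also have "\<dots> = real (N ^ (k - 1)) * LR" using Bcard by simp
  finally have main: "(\<Prod>j<k. \<Sum>z\<in>E j. exp (Phi f \<phi> 0 z (t j))) \<le> D ^ k * (real (N ^ (k - 1)) * LR)"
    by (simp add: mult_left_mono D_def)
  have "real (N ^ (k - 1)) \<le> real (N + 1) ^ k"
  proof -
    have "real (N ^ (k - 1)) \<le> real (N + 1) ^ (k - 1)" by (simp add: power_mono)
    also have "\<dots> \<le> real (N + 1) ^ k" by (intro power_increasing) auto
    finally show ?thesis .
  qed
  then have "D ^ k * (real (N ^ (k - 1)) * LR) \<le> D ^ k * (real (N + 1) ^ k * LR)"
    using LR0 by (intro mult_left_mono mult_right_mono) (auto simp: D_def)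
  with main have fin: "(\<Prod>j<k. \<Sum>z\<in>E j. exp (Phi f \<phi> 0 z (t j))) \<le> D ^ k * (real (N + 1) ^ k * LR)"
    by linarith
  have "(D * real (N + 1)) ^ k * LR = D ^ k * (real (N + 1) ^ k * LR)" by (simp add: power_mult_distrib)
  with fin show ?thesis unfolding D_def N_def LR_def T_def \<theta>_def by (simp only:)
qed



theorem proposition4p3:
  fixes f :: "real \<Rightarrow> 'a::metric_space \<Rightarrow> 'a" and \<phi> :: "'a \<Rightarrow> real"
    and G :: "('a \<times> real) set" and T0 \<delta> \<tau> \<zeta> \<gamma> :: real
  assumes "compact (UNIV :: 'a set)"
    and "is_cont_flow f"
    and "continuous_on UNIV \<phi>"
    and "G \<subseteq> UNIV \<times> {0..}"
    and "\<delta> > 0"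
    and "W_spec f (G \<inter> (UNIV \<times> {T0..})) \<delta> \<tau>"
    and "\<zeta> > \<delta>"
    and "bowen_property f \<phi> G \<zeta>"
    and "\<gamma> > 2 * \<zeta>"
  shows "\<exists>C1 > 0. \<forall>k::nat. \<forall>t :: nat \<Rightarrow> real. k \<ge> 1 \<and> (\<forall>j<k. t j \<ge> T0) \<longrightarrow>
     (\<Prod>j<k. Lambda f \<phi> G \<gamma> 0 (t j))
       \<le> C1 ^ k * Lambda f \<phi> (UNIV \<times> {0..}) (\<zeta> - \<delta>) 0 ((\<Sum>j<k. t j) + (real k - 1) * \<tau>)"
proof -
  note cpt = assms(1) and flow = assms(2) and phic = assms(3) and GS = assms(4) and dpos = assms(5)
    and zd = assms(7) and gz = assms(9)
  obtain B where B0: "B \<ge> 0" and Bb: "\<And>x. \<bar>\<phi> x\<bar> \<le> B" using phi_bound[OF cpt phic] by blast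
  obtain K where Kb0: "\<forall>x t. (x, t) \<in> G \<longrightarrow>
      (\<forall>y \<in> bowen_ball f t x \<zeta>. \<bar>birkhoff_int f \<phi> x t - birkhoff_int f \<phi> y t\<bar> \<le> K)"
    using assms(8) unfolding bowen_property_def by blast
  define K0 where "K0 = max K 0"
  have K0: "K0 \<ge> 0" unfolding K0_def by simp
  have Kb: "\<forall>x t. (x, t) \<in> G \<longrightarrow>
      (\<forall>y \<in> bowen_ball f t x \<zeta>. \<bar>birkhoff_int f \<phi> x t - birkhoff_int f \<phi> y t\<bar> \<le> K0)"
  proof (intro allI impI ballI)
    fix x t y assume xt: "(x, t) \<in> G" "y \<in> bowen_ball f t x \<zeta>"
    then have "\<bar>birkhoff_int f \<phi> x t - birkhoff_int f \<phi> y t\<bar> \<le> K" using Kb0 by blast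
    then show "\<bar>birkhoff_int f \<phi> x t - birkhoff_int f \<phi> y t\<bar> \<le> K0" unfolding K0_def by linarith
  qed
  define G' where "G' = G \<inter> (UNIV \<times> {T0..})"
  have W: "\<exists>g :: ('a \<times> real) list \<Rightarrow> nat \<Rightarrow> real. (\<forall>xs. xs \<noteq> [] \<and> set xs \<subseteq> G' \<longrightarrow>
        (\<forall>i. i + 1 < length xs \<longrightarrow> 0 \<le> g xs i \<and> g xs i \<le> \<tau>) \<and>
        (\<exists>y. \<forall>j < length xs.
            bowen_dist f (snd (xs ! j)) (f (seg_start xs (g xs) j) y) (fst (xs ! j)) < \<delta>)) \<and> (\<forall>xs ys j. xs \<noteq> [] \<and> set xs \<subseteq> G' \<and> ys \<noteq> [] \<and> set ys \<subseteq> G' \<and>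
        j \<le> length xs \<and> j \<le> length ys \<and> take j xs = take j ys \<longrightarrow>
        (\<forall>i. i + 1 < j \<longrightarrow> g xs i = g ys i))"
    using assms(6) unfolding W_spec_def G'_def .
  then obtain g :: "('a \<times> real) list \<Rightarrow> nat \<Rightarrow> real" where gg: "(\<forall>xs. xs \<noteq> [] \<and> set xs \<subseteq> G' \<longrightarrow>
        (\<forall>i. i + 1 < length xs \<longrightarrow> 0 \<le> g xs i \<and> g xs i \<le> \<tau>) \<and>
        (\<exists>y. \<forall>j < length xs.
            bowen_dist f (snd (xs ! j)) (f (seg_start xs (g xs) j) y) (fst (xs ! j)) < \<delta>)) \<and> (\<forall>xs ys j. xs \<noteq> [] \<and> set xs \<subseteq> G' \<and> ys \<noteq> [] \<and> set ys \<subseteq> G' \<and>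
        j \<le> length xs \<and> j \<le> length ys \<and> take j xs = take j ys \<longrightarrow>
        (\<forall>i. i + 1 < j \<longrightarrow> g xs i = g ys i))"
    by (rule exE)
  have gspec: "(\<forall>xs. xs \<noteq> [] \<and> set xs \<subseteq> G' \<longrightarrow>
        (\<forall>i. i + 1 < length xs \<longrightarrow> 0 \<le> g xs i \<and> g xs i \<le> \<tau>) \<and>
        (\<exists>y. \<forall>j < length xs.
            bowen_dist f (snd (xs ! j)) (f (seg_start xs (g xs) j) y) (fst (xs ! j)) < \<delta>))" using gg by (rule conjunct1)
  have gcons: "(\<forall>xs ys j. xs \<noteq> [] \<and> set xs \<subseteq> G' \<and> ys \<noteq> [] \<and> set ys \<subseteq> G' \<and>
        j \<le> length xs \<and> j \<le> length ys \<and> take j xs = take j ys \<longrightarrow>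
        (\<forall>i. i + 1 < j \<longrightarrow> g xs i = g ys i))" using gg by (rule conjunct2)
  have eta: "\<gamma> - 2 * \<zeta> > 0" using gz by simp
  obtain \<epsilon> where eps: "\<epsilon> > 0" and epsH: "\<forall>(z::'a) h. 0 \<le> h \<and> h < \<epsilon> \<longrightarrow> dist (f h z) z < \<gamma> - 2 * \<zeta>"
    using flow_shift_uc[OF cpt flow eta] by blast
  have gpos: "\<gamma> > 0" using gz zd dpos by simp
  have th0: "\<zeta> - \<delta> > 0" using zd by simp
  define C1 where "C1 = exp (K0 + \<tau> * B) * real (nat (\<lfloor>\<tau> / \<epsilon>\<rfloor> + 1) + 1)"
  have C1pos: "C1 > 0" unfolding C1_def by simp
  show ?thesis
  proof (intro exI[of _ C1] conjI allI impI)
    show "C1 > 0" by (rule C1pos)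
    fix k :: nat and t :: "nat \<Rightarrow> real"
    assume kt: "k \<ge> 1 \<and> (\<forall>j<k. t j \<ge> T0)"
    then have k1: "k \<ge> 1" and tT0: "\<forall>j<k. t j \<ge> T0" by auto
    define LR where "LR = Lambda f \<phi> (UNIV \<times> {0..}) (\<zeta> - \<delta>) 0 ((\<Sum>j<k. t j) + (real k - 1) * \<tau>)"
    have LR0: "0 \<le> LR" unfolding LR_def by (rule Lam_nonneg[OF cpt flow phic th0]) auto
    have M0: "0 \<le> C1 ^ k * LR" using C1pos LR0 by simp
    show "(\<Prod>j<k. Lambda f \<phi> G \<gamma> 0 (t j)) \<le> C1 ^ k * LR"
    proof (cases "\<exists>j<k. slice G (t j) = {}")
      case True
      then obtain j where j: "j < k" "slice G (t j) = {}" by blast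
      have "Lambda f \<phi> G \<gamma> 0 (t j) = 0" by (rule Lam_empty[OF j(2)])
      then have "\<exists>a\<in>{..<k}. Lambda f \<phi> G \<gamma> 0 (t a) = 0" using j(1) by auto
      then have "(\<Prod>j<k. Lambda f \<phi> G \<gamma> 0 (t j)) = 0" by (rule prod_zero[OF finite_lessThan])
      then show ?thesis using M0 by linarith
    next
      case False
      then have ne: "\<forall>j<k. slice G (t j) \<noteq> {}" by simp
      have tpos: "\<forall>j<k. t j \<ge> 0"
      proof (intro allI impI)
        fix j assume "j < k"
        then have "slice G (t j) \<noteq> {}" using ne by simp
        then obtain z where "z \<in> slice G (t j)" unfolding ex_in_conv[symmetric] by (elim exE)
        then have "(z, t j) \<in> G" unfolding slice_def by simp
        then show "t j \<ge> 0" using GS by blast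
      qed
      have tau0: "\<tau> \<ge> 0"
      proof -
        have "0 < k" using k1 by simp
        then have "slice G (t 0) \<noteq> {}" using ne by simp
        then obtain z where z: "z \<in> slice G (t 0)" unfolding ex_in_conv[symmetric] by (elim exE)
        have "T0 \<le> t 0" using tT0 \<open>0 < k\<close> by blast
        then have "(z, t 0) \<in> G'" using z unfolding slice_def G'_def by simp
        then have L: "[(z, t 0), (z, t 0)] \<noteq> [] \<and> set [(z, t 0), (z, t 0)] \<subseteq> G'" by simp
        have "\<forall>i. i + 1 < length [(z, t 0), (z, t 0)] \<longrightarrow> 0 \<le> g [(z, t 0), (z, t 0)] i \<and> g [(z, t 0), (z, t 0)] i \<le> \<tau>"
          using gspec[rule_format, OF L] by (rule conjunct1)
        then have "0 \<le> g [(z, t 0), (z, t 0)] 0 \<and> g [(z, t 0), (z, t 0)] 0 \<le> \<tau>" by simp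
        then show ?thesis by linarith
      qed
      define A where "A = (\<lambda>j. {(\<Sum>x\<in>E. exp (Phi f \<phi> 0 x (t j))) | E. finite E \<and> E \<subseteq> slice G (t j) \<and> separated f (t j) \<gamma> E})"
      have "(\<Prod>j<k. Sup (A j)) \<le> C1 ^ k * LR"
      proof (rule prod_Sup_le)
        show "\<forall>j<k. A j \<noteq> {}"
        proof (intro allI impI)
          fix j assume "j < k"
          have "0 \<in> A j" unfolding A_def by (rule Lam_set_nonempty)
          then show "A j \<noteq> {}" by (metis empty_iff)
        qed
        show "\<forall>j<k. bdd_above (A j)"
        proof (intro allI impI)
          fix j assume "j < k"
          then have "0 \<le> t j" using tpos by simp
          then show "bdd_above (A j)" unfolding A_def by (rule Lam_bdd[OF cpt flow phic gpos])
        qed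
        show "\<forall>j<k. \<forall>a\<in>A j. 0 \<le> a"
        proof (intro allI impI ballI)
          fix j a assume "a \<in> A j"
          then obtain E where "a = (\<Sum>x\<in>E. exp (Phi f \<phi> 0 x (t j)))" unfolding A_def by blast
          then show "0 \<le> a" by (simp add: sum_nonneg)
        qed
        show "0 \<le> C1 ^ k * LR" by (rule M0)
        show "\<forall>x. (\<forall>j<k. x j \<in> A j) \<longrightarrow> (\<Prod>j<k. x j) \<le> C1 ^ k * LR"
        proof (intro allI impI)
          fix x assume x: "\<forall>j<k. x j \<in> A j"
          define E where "E = (\<lambda>j. SOME E. x j = (\<Sum>z\<in>E. exp (Phi f \<phi> 0 z (t j))) \<and> finite E \<and> E \<subseteq> slice G (t j) \<and> separated f (t j) \<gamma> E)"
          have E: "x j = (\<Sum>z\<in>E j. exp (Phi f \<phi> 0 z (t j))) \<and> finite (E j) \<and> E j \<subseteq> slice G (t j) \<and> separated f (t j) \<gamma> (E j)"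
            if jk: "j < k" for j
          proof -
            have "\<exists>E. x j = (\<Sum>z\<in>E. exp (Phi f \<phi> 0 z (t j))) \<and> finite E \<and> E \<subseteq> slice G (t j) \<and> separated f (t j) \<gamma> E"
              using x jk unfolding A_def by blast
            then show ?thesis unfolding E_def by (rule someI_ex)
          qed
          have "(\<Prod>j<k. x j) = (\<Prod>j<k. \<Sum>z\<in>E j. exp (Phi f \<phi> 0 z (t j)))"
            using E by (intro prod.cong) auto
          also have "\<dots> \<le> C1 ^ k * LR" unfolding C1_def LR_def
            by (rule core[OF cpt flow phic G'_def dpos zd gz gspec gcons Kb K0 B0 Bb eps epsH tau0 k1 tT0 tpos])
               (use E in auto)
          finally show "(\<Prod>j<k. x j) \<le> C1 ^ k * LR" .
        qed
      qed
      then show ?thesis unfolding A_def Lambda_def by simp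
    qed
  qed
qed


end
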